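(* Let $\lambda$ be an infinite cardinal, $\theta$ an infinite regular cardinal and $\chi$ either $2$ or an infinite cardinal. Suppose that $m(\lambda,\lambda,\theta,\chi)=\lambda$. Then for every map $d:\lambda^+\times\lambda^+\to\lambda$, $A(d)\cap E^{\lambda^+}_\theta\in J_\chi[\lambda^+]$.
   Context: $E^\kappa_\theta=\{\alpha<\kappa\mid\mathrm{cf}(\alpha)=\theta\}$. For a map $d:\delta\times\kappa\to\lambda$, $A(d)$ is the set of all $\alpha<\kappa$ such that for every cofinal $B\subseteq\alpha$ there exist $\eta\in\delta\cap\alpha$ and a cofinal $B'\subseteq B$ on which $\beta\mapsto d(\eta,\beta)$ is injective. $m(\lambda,\lambda,\theta,\chi)$ is the least size of a family $\mathcal H$ of functions from $\lambda$ to $[\lambda]^{<\chi}$ such that for every $X\in[\lambda]^\theta$ and every $g:X\to\lambda$ there is $h\in\mathcal H$ with $|\{\xi\in X\mid g(\xi)\in h(\xi)\}|=\theta$. For regular uncountable $\kappa$, $J_\chi[\kappa]$ is the collection of all $S\subseteq\kappa$ for which there exist a club $C\subseteq\kappa$ and functions $f_i:\kappa\to[\kappa]^{<\chi}$ ($i<\kappa$) such that for every $\alpha\in S\cap C$, every regressive $f:\alpha\to\alpha$ and every cofinal $B\subseteq\alpha$, there is $i<\alpha$ with $\sup\{\beta\in B\mid f(\beta)\in f_i(\beta)\}=\alpha$. *)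

theory Defs
  imports Main "HOL-Library.FuncSet"
begin

(* Cardinals/ordinals are represented by well-order relations (HOL's BNF cardinal library).
   For a cardinal K (a Card_order relation), ordinals alpha < K are the elements of Field K;
   the ordinal alpha is identified with the set underS K alpha of its predecessors. *)

definition sup_is :: "'k rel \<Rightarrow> 'k set \<Rightarrow> 'k \<Rightarrow> bool" where
  "sup_is K B \<alpha> \<longleftrightarrow> (\<forall>\<gamma>\<in>underS K \<alpha>. \<exists>\<beta>\<in>B. (\<gamma>, \<beta>) \<in> K \<and> \<gamma> \<noteq> \<beta>)"

definition cofinal_sub :: "'k rel \<Rightarrow> 'k set \<Rightarrow> 'k \<Rightarrow> bool" where
  "cofinal_sub K B \<alpha> \<longleftrightarrow> B \<subseteq> underS K \<alpha> \<and> sup_is K B \<alpha>"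

definition cf_is :: "'k rel \<Rightarrow> 'k \<Rightarrow> 't rel \<Rightarrow> bool" where
  "cf_is K \<alpha> T \<longleftrightarrow>
     (\<exists>B. cofinal_sub K B \<alpha> \<and> (card_of B, T) \<in> ordIso) \<and>
     (\<forall>B. cofinal_sub K B \<alpha> \<longrightarrow> (T, card_of B) \<in> ordLeq)"

definition E_cof :: "'k rel \<Rightarrow> 't rel \<Rightarrow> 'k set" where
  "E_cof K T = {\<alpha> \<in> Field K. cf_is K \<alpha> T}"

definition small_subsets :: "'a set \<Rightarrow> 'c rel \<Rightarrow> 'a set set" where
  "small_subsets X C = {Y. Y \<subseteq> X \<and> (card_of Y, C) \<in> ordLess}"

(* A(d) for d : delta x kappa -> lambda, here delta = kappa *)
definition A_set :: "'k rel \<Rightarrow> ('k \<Rightarrow> 'k \<Rightarrow> 'a) \<Rightarrow> 'k set" where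
  "A_set K d = {\<alpha> \<in> Field K. \<forall>B. cofinal_sub K B \<alpha> \<longrightarrow>
      (\<exists>\<eta>\<in>underS K \<alpha>. \<exists>B'. B' \<subseteq> B \<and> cofinal_sub K B' \<alpha> \<and> inj_on (\<lambda>\<beta>. d \<eta> \<beta>) B')}"

(* the covering property in the definition of m(lambda,lambda,theta,chi) *)
definition m_covers :: "'a rel \<Rightarrow> 't rel \<Rightarrow> 'c rel \<Rightarrow> ('a \<Rightarrow> 'a set) set \<Rightarrow> bool" where
  "m_covers L T C H \<longleftrightarrow>
     H \<subseteq> (Field L \<rightarrow>\<^sub>E small_subsets (Field L) C) \<and>
     (\<forall>X g. X \<subseteq> Field L \<and> (card_of X, T) \<in> ordIso \<and> g \<in> X \<rightarrow> Field L \<longrightarrow>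
        (\<exists>h\<in>H. (card_of {\<xi>\<in>X. g \<xi> \<in> h \<xi>}, T) \<in> ordIso))"

definition m_equals :: "'a rel \<Rightarrow> 't rel \<Rightarrow> 'c rel \<Rightarrow> bool" where
  "m_equals L T C \<longleftrightarrow>
     (\<exists>H. m_covers L T C H \<and> (card_of H, L) \<in> ordIso) \<and>
     (\<forall>H. m_covers L T C H \<longrightarrow> (L, card_of H) \<in> ordLeq)"

definition club :: "'k rel \<Rightarrow> 'k set \<Rightarrow> bool" where
  "club K D \<longleftrightarrow> D \<subseteq> Field K \<and>
     (\<forall>\<gamma>\<in>Field K. \<exists>\<delta>\<in>D. (\<gamma>, \<delta>) \<in> K) \<and>
     (\<forall>\<alpha>\<in>Field K. underS K \<alpha> \<noteq> {} \<and> sup_is K (D \<inter> underS K \<alpha>) \<alpha> \<longrightarrow> \<alpha> \<in> D)"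

definition J_ideal :: "'k rel \<Rightarrow> 'c rel \<Rightarrow> 'k set set" where
  "J_ideal K C = {S. S \<subseteq> Field K \<and>
     (\<exists>D F. club K D \<and>
        (\<forall>i\<in>Field K. F i \<in> Field K \<rightarrow> small_subsets (Field K) C) \<and>
        (\<forall>\<alpha>\<in>S \<inter> D. \<forall>f B.
            (\<forall>\<beta>\<in>underS K \<alpha>. f \<beta> \<in> underS K \<alpha> \<and> (underS K \<beta> \<noteq> {} \<longrightarrow> f \<beta> \<in> underS K \<beta>)) \<and>
            cofinal_sub K B \<alpha> \<longrightarrow>
            (\<exists>i\<in>underS K \<alpha>. sup_is K {\<beta>\<in>B. f \<beta> \<in> F i \<beta>} \<alpha>)))}"

end

theory Submission
  imports Defs
begin
unbundle cardinal_syntax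

lemma wo_lt_le_trans:
  assumes "wo_rel K" "(a,b) \<in> K" "a \<noteq> b" "(b,c) \<in> K"
  shows "(a,c) \<in> K \<and> a \<noteq> c"
proof -
  have t: "trans K" and an: "antisym K" using assms(1) wo_rel.TRANS wo_rel.ANTISYM by blast+
  have "(a,c) \<in> K" using t assms(2,4) unfolding trans_def by blast
  moreover have "a \<noteq> c" using an assms(2,3,4) unfolding antisym_def by blast
  ultimately show ?thesis by blast
qed

lemma wo_le_lt_trans:
  assumes "wo_rel K" "(a,b) \<in> K" "(b,c) \<in> K" "b \<noteq> c"
  shows "(a,c) \<in> K \<and> a \<noteq> c"
proof -
  have t: "trans K" and an: "antisym K" using assms(1) wo_rel.TRANS wo_rel.ANTISYM by blast+
  have "(a,c) \<in> K" using t assms(2,3) unfolding trans_def by blast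
  moreover have "a \<noteq> c" using an assms(2,3,4) unfolding antisym_def by blast
  ultimately show ?thesis by blast
qed

lemma wo_not_lt:
  assumes "wo_rel K" "a \<in> Field K" "b \<in> Field K" "\<not> ((a,b) \<in> K \<and> a \<noteq> b)"
  shows "(b,a) \<in> K"
  using assms wo_rel.TOTALS[OF assms(1)] wo_rel.REFL[OF assms(1)]
  by (metis refl_on_def)

lemma records:
  fixes K :: "'k rel" and T :: "'t rel"
  assumes K: "wo_rel K" and T: "Card_order T"
    and \<alpha>: "\<alpha> \<in> Field K"
    and C0: "cofinal_sub K C0 \<alpha>" "|C0| =o T"
    and B: "cofinal_sub K B \<alpha>"
  shows "\<exists>B0 \<subseteq> B. cofinal_sub K B0 \<alpha> \<and> |B0| \<le>o T \<and> (\<forall>\<beta>\<in>B0. underS K \<beta> \<noteq> {})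
     \<and> (\<forall>\<gamma>\<in>underS K \<alpha>. |{b\<in>B0. (b,\<gamma>) \<in> K}| <o T)"
proof -
  have Tw: "wo_rel T" using T Card_order_wo_rel by blast
  have "|Field T| =o |C0|" using ordIso_transitive[OF card_of_Field_ordIso[OF T] ordIso_symmetric[OF C0(2)]] .
  then obtain e0 where e0: "bij_betw e0 (Field T) C0" using card_of_ordIso by blast
  have pick: "\<exists>\<beta>. \<beta> \<in> B \<and> (e0 t, \<beta>) \<in> K \<and> e0 t \<noteq> \<beta>" if "t \<in> Field T" for t
  proof -
    have "e0 t \<in> C0" using e0 that bij_betwE by blast
    then have "e0 t \<in> underS K \<alpha>" using C0(1) unfolding cofinal_sub_def by blast
    then show ?thesis using B unfolding cofinal_sub_def sup_is_def by blast
  qed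
  define b where "b t = (SOME \<beta>. \<beta> \<in> B \<and> (e0 t, \<beta>) \<in> K \<and> e0 t \<noteq> \<beta>)" for t
  have b: "b t \<in> B \<and> (e0 t, b t) \<in> K \<and> e0 t \<noteq> b t" if "t \<in> Field T" for t
    unfolding b_def using someI_ex[OF pick[OF that]] .
  have BW: "B \<subseteq> Field K" using B underS_Field[of _ K \<alpha>] unfolding cofinal_sub_def by blast
  define R where "R = {t \<in> Field T. \<forall>s\<in>underS T t. (b s, b t) \<in> K \<and> b s \<noteq> b t}"
  define B0 where "B0 = b ` R"
  have RT: "R \<subseteq> Field T" unfolding R_def by blast
  have B0B: "B0 \<subseteq> B"
  proof
    fix x assume "x \<in> B0"
    then obtain t where "t \<in> R" "x = b t" unfolding B0_def by blast
    then show "x \<in> B" using b RT by blast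
  qed
  have B0ne: "\<forall>\<beta>\<in>B0. underS K \<beta> \<noteq> {}"
  proof
    fix x assume "x \<in> B0"
    then obtain t where t: "t \<in> R" "x = b t" unfolding B0_def by blast
    then have "e0 t \<in> underS K x" using b[of t] RT unfolding underS_def by blast
    then show "underS K x \<noteq> {}" by blast
  qed
  have B0card: "|B0| \<le>o T"
  proof -
    have 1: "|B0| \<le>o |R|" unfolding B0_def by (rule card_of_image)
    have 2: "|R| \<le>o |Field T|" using RT by (rule card_of_mono1)
    show ?thesis using ordLeq_ordIso_trans[OF ordLeq_transitive[OF 1 2] card_of_Field_ordIso[OF T]] .
  qed
  define Q where "Q \<gamma> = {t \<in> Field T. (\<gamma>, b t) \<in> K \<and> \<gamma> \<noteq> b t}" for \<gamma>
  have Qne: "Q \<gamma> \<noteq> {}" if gg: "\<gamma> \<in> underS K \<alpha>" for \<gamma>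
  proof -
    have "sup_is K C0 \<alpha>" using C0(1) unfolding cofinal_sub_def by simp
    then obtain c where c: "c \<in> C0" "(\<gamma>, c) \<in> K" "\<gamma> \<noteq> c" using gg unfolding sup_is_def by blast
    have "c \<in> e0 ` Field T" using bij_betw_imp_surj_on[OF e0] c(1) by simp
    then obtain t where t: "t \<in> Field T" "e0 t = c" by (auto simp del: )
    have "(c, b t) \<in> K" using b[OF t(1)] t(2) by simp
    then have "(\<gamma>, b t) \<in> K \<and> \<gamma> \<noteq> b t" using wo_lt_le_trans[OF K c(2,3)] by simp
    then show ?thesis unfolding Q_def using t(1) by blast
  qed
  define t0 where "t0 \<gamma> = wo_rel.minim T (Q \<gamma>)" for \<gamma>
  have t0: "t0 \<gamma> \<in> Q \<gamma>" "\<And>s. s \<in> Q \<gamma> \<Longrightarrow> (t0 \<gamma>, s) \<in> T" if "\<gamma> \<in> underS K \<alpha>" for \<gamma>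
  proof -
    have sub: "Q \<gamma> \<subseteq> Field T" unfolding Q_def by blast
    show "t0 \<gamma> \<in> Q \<gamma>" unfolding t0_def using wo_rel.minim_in[OF Tw sub Qne[OF that]] .
    show "(t0 \<gamma>, s) \<in> T" if "s \<in> Q \<gamma>" for s unfolding t0_def using wo_rel.minim_least[OF Tw sub that] .
  qed
  have beforeQ: "(b s, \<gamma>) \<in> K" if g: "\<gamma> \<in> underS K \<alpha>" and s: "s \<in> underS T (t0 \<gamma>)" for \<gamma> s
  proof -
    have sF: "s \<in> Field T" using s by (rule underS_Field)
    have "s \<notin> Q \<gamma>"
    proof
      assume "s \<in> Q \<gamma>"
      then have "(t0 \<gamma>, s) \<in> T" using t0(2)[OF g] by blast
      moreover have "(s, t0 \<gamma>) \<in> T" "s \<noteq> t0 \<gamma>" using s unfolding underS_def by blast+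
      ultimately show False using antisymD[OF wo_rel.ANTISYM[OF Tw]] by blast
    qed
    then have "\<not> ((\<gamma>, b s) \<in> K \<and> \<gamma> \<noteq> b s)" unfolding Q_def using sF by blast
    moreover have "\<gamma> \<in> Field K" using g by (rule underS_Field)
    moreover have "b s \<in> Field K" using b[OF sF] BW by blast
    ultimately show ?thesis using wo_not_lt[OF K] by blast
  qed
  have t0R: "t0 \<gamma> \<in> R" if g: "\<gamma> \<in> underS K \<alpha>" for \<gamma>
  proof -
    have q: "t0 \<gamma> \<in> Field T" "(\<gamma>, b (t0 \<gamma>)) \<in> K" "\<gamma> \<noteq> b (t0 \<gamma>)" using t0(1)[OF g] unfolding Q_def by blast+
    have "(b s, b (t0 \<gamma>)) \<in> K \<and> b s \<noteq> b (t0 \<gamma>)" if "s \<in> underS T (t0 \<gamma>)" for s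
      using wo_le_lt_trans[OF K beforeQ[OF g that] q(2,3)] .
    then show ?thesis unfolding R_def using q(1) by blast
  qed
  have cof: "sup_is K B0 \<alpha>"
    unfolding sup_is_def
  proof
    fix \<gamma> assume g: "\<gamma> \<in> underS K \<alpha>"
    have "b (t0 \<gamma>) \<in> B0" unfolding B0_def using t0R[OF g] by blast
    moreover have "(\<gamma>, b (t0 \<gamma>)) \<in> K" "\<gamma> \<noteq> b (t0 \<gamma>)" using t0(1)[OF g] unfolding Q_def by blast+
    ultimately show "\<exists>\<beta>\<in>B0. (\<gamma>, \<beta>) \<in> K \<and> \<gamma> \<noteq> \<beta>" by blast
  qed
  have bnd: "|{x\<in>B0. (x,\<gamma>) \<in> K}| <o T" if g: "\<gamma> \<in> underS K \<alpha>" for \<gamma>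
  proof -
    have q: "t0 \<gamma> \<in> Field T" "(\<gamma>, b (t0 \<gamma>)) \<in> K" "\<gamma> \<noteq> b (t0 \<gamma>)" using t0(1)[OF g] unfolding Q_def by blast+
    have "{x\<in>B0. (x,\<gamma>) \<in> K} \<subseteq> b ` underS T (t0 \<gamma>)"
    proof
      fix x assume x: "x \<in> {x\<in>B0. (x,\<gamma>) \<in> K}"
      then obtain t where t: "t \<in> R" "x = b t" "(b t, \<gamma>) \<in> K" unfolding B0_def by blast
      have tF: "t \<in> Field T" using t(1) unfolding R_def by blast
      have "t \<in> underS T (t0 \<gamma>)"
      proof (rule ccontr)
        assume nt: "t \<notin> underS T (t0 \<gamma>)"
        have "(t0 \<gamma>, t) \<in> T" using wo_not_lt[OF Tw q(1) tF] nt unfolding underS_def by blast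
        show False
        proof (cases "t = t0 \<gamma>")
          case True
          then show False using t(3) q(2,3) wo_rel.ANTISYM[OF K] unfolding antisym_def by blast
        next
          case False
          then have "t0 \<gamma> \<in> underS T t" using \<open>(t0 \<gamma>, t) \<in> T\<close> unfolding underS_def by blast
          then have "(b (t0 \<gamma>), b t) \<in> K" "b (t0 \<gamma>) \<noteq> b t" using t(1) unfolding R_def by blast+
          then have "(\<gamma>, b t) \<in> K \<and> \<gamma> \<noteq> b t" using wo_lt_le_trans[OF K q(2,3)] by blast
          then show False using t(3) wo_rel.ANTISYM[OF K] unfolding antisym_def by blast
        qed
      qed
      then show "x \<in> b ` underS T (t0 \<gamma>)" using t(2) by blast
    qed
    then have "|{x\<in>B0. (x,\<gamma>) \<in> K}| \<le>o |underS T (t0 \<gamma>)|"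
      using ordLeq_transitive[OF card_of_mono1 card_of_image] by blast
    then show ?thesis using ordLeq_ordLess_trans[OF _ card_of_underS[OF T q(1)]] by blast
  qed
  have "cofinal_sub K B0 \<alpha>" using cof B0B B unfolding cofinal_sub_def by blast
  then show ?thesis using B0B B0card B0ne bnd by blast
qed

lemma wo_refl: "wo_rel K \<Longrightarrow> a \<in> Field K \<Longrightarrow> (a,a) \<in> K"
  using wo_rel.REFL by (metis refl_on_def)

lemma club_pairing:
  fixes L :: "'a rel"
  assumes L: "Card_order L" "\<not> finite (Field L)"
  shows "\<exists>\<pi> D. club (cardSuc L) D \<and> inj_on \<pi> (Field (cardSuc L) \<times> Field L)
    \<and> \<pi> ` (Field (cardSuc L) \<times> Field L) \<subseteq> Field (cardSuc L)
    \<and> (\<forall>\<delta>\<in>D. \<forall>\<eta>\<in>underS (cardSuc L) \<delta>. \<forall>j\<in>Field L. \<pi> (\<eta>,j) \<in> underS (cardSuc L) \<delta>)"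
proof -
  define K where "K = cardSuc L"
  define W where "W = Field K"
  have KC: "Card_order K" unfolding K_def using cardSuc_Card_order[OF L(1)] .
  have Kw: "wo_rel K" using Card_order_wo_rel[OF KC] .
  have Winf: "\<not> finite W" unfolding W_def K_def using cardSuc_finite[OF L(1)] L(2) by simp
  have LK: "L <o K" unfolding K_def using cardSuc_greater[OF L(1)] .
  have W_iso: "|W| =o K" unfolding W_def using card_of_Field_ordIso[OF KC] .
  have FL: "|Field L| =o L" using card_of_Field_ordIso[OF L(1)] .
  have FLK: "|Field L| \<le>o K" using ordIso_ordLeq_trans[OF FL ordLess_imp_ordLeq[OF LK]] .
  have WK: "|W| \<le>o K" using ordIso_imp_ordLeq[OF W_iso] .
  have Winf': "\<not> finite (Field K)" using Winf unfolding W_def .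
  have prod: "|W \<times> Field L| \<le>o K"
    using card_of_Times_ordLeq_infinite_Field[OF Winf' WK FLK KC] .
  have "|W \<times> Field L| \<le>o |W|" using ordLeq_ordIso_trans[OF prod ordIso_symmetric[OF W_iso]] .
  then obtain \<pi> where \<pi>: "inj_on \<pi> (W \<times> Field L)" "\<pi> ` (W \<times> Field L) \<subseteq> W"
    using card_of_ordLeq[of "W \<times> Field L" W] by blast
  have Kreg: "regularCard K" unfolding K_def using infinite_cardSuc_regularCard[OF L(2) L(1)] .
  have small: "\<exists>\<delta>\<in>W. \<forall>s\<in>S. (s,\<delta>) \<in> K \<and> s \<noteq> \<delta>" if S: "|S| \<le>o L" "S \<subseteq> W" for S
  proof (rule ccontr)
    assume nb: "\<not> (\<exists>\<delta>\<in>W. \<forall>s\<in>S. (s,\<delta>) \<in> K \<and> s \<noteq> \<delta>)"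
    have "cofinal S K" unfolding cofinal_def
    proof
      fix a assume a: "a \<in> Field K"
      have "\<not> (\<exists>a. Field K = under K a)" using Card_order_infinite_not_under[OF KC Winf'] .
      then have "Field K \<noteq> under K a" by blast
      moreover have "under K a \<subseteq> Field K" unfolding under_def Field_def by blast
      ultimately obtain a' where a': "a' \<in> Field K" "a' \<notin> under K a" by blast
      then have a'2: "(a',a) \<notin> K" unfolding under_def by blast
      have 1: "(a,a') \<in> K" using wo_not_lt[OF Kw a a'(1)] a'2 by blast
      have 2: "a \<noteq> a'" using a'2 wo_refl[OF Kw a] by blast
      obtain s where s: "s \<in> S" "\<not> ((s,a') \<in> K \<and> s \<noteq> a')" using nb a'(1) unfolding W_def by blast
      have sK: "s \<in> Field K" using s(1) S(2) unfolding W_def by blast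
      have 3: "(a', s) \<in> K" using wo_not_lt[OF Kw sK a'(1) s(2)] .
      have "(a, s) \<in> K \<and> a \<noteq> s" using wo_lt_le_trans[OF Kw 1 2 3] .
      then show "\<exists>b\<in>S. a \<noteq> b \<and> (a, b) \<in> K" using s(1) by blast
    qed
    then have "|S| =o K" using Kreg S(2) unfolding regularCard_def W_def by blast
    moreover have "|S| <o K" using ordLeq_ordLess_trans[OF S(1) LK] .
    ultimately show False using not_ordLess_ordIso by blast
  qed
  have usL: "|underS K \<gamma>| \<le>o L" if "\<gamma> \<in> W" for \<gamma>
  proof -
    have "\<gamma> \<in> Field K" using that unfolding W_def .
    then have "|underS K \<gamma>| <o K" using card_of_underS[OF KC] by blast
    then show ?thesis unfolding K_def using cardSuc_ordLeq_ordLess[OF L(1) card_of_Card_order] by blast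
  qed
  have imgL: "|\<pi> ` (underS K \<gamma> \<times> Field L)| \<le>o L" if "\<gamma> \<in> W" for \<gamma>
  proof -
    have "|underS K \<gamma> \<times> Field L| \<le>o L"
      using card_of_Times_ordLeq_infinite_Field[OF L(2) usL[OF that] ordIso_imp_ordLeq[OF FL] L(1)] .
    then show ?thesis using ordLeq_transitive[OF card_of_image] by blast
  qed
  have usW: "underS K \<gamma> \<subseteq> W" for \<gamma> unfolding W_def using underS_Field[of _ K \<gamma>] by blast
  have imgW: "\<pi> ` (underS K \<gamma> \<times> Field L) \<subseteq> W" for \<gamma> using \<pi>(2) usW by blast
  define c where "c \<gamma> = (SOME \<delta>. \<delta> \<in> W \<and> (\<forall>s\<in>\<pi> ` (underS K \<gamma> \<times> Field L). (s,\<delta>) \<in> K \<and> s \<noteq> \<delta>))" for \<gamma>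
  have c: "c \<gamma> \<in> W \<and> (\<forall>s\<in>\<pi> ` (underS K \<gamma> \<times> Field L). (s,c \<gamma>) \<in> K \<and> s \<noteq> c \<gamma>)" if "\<gamma> \<in> W" for \<gamma>
  proof -
    have "\<exists>\<delta>. \<delta> \<in> W \<and> (\<forall>s\<in>\<pi> ` (underS K \<gamma> \<times> Field L). (s,\<delta>) \<in> K \<and> s \<noteq> \<delta>)"
      using small[OF imgL[OF that] imgW] by blast
    then show ?thesis unfolding c_def by (rule someI_ex)
  qed
  define D where "D = {\<delta>\<in>W. \<forall>\<eta>\<in>underS K \<delta>. \<forall>j\<in>Field L. \<pi> (\<eta>,j) \<in> underS K \<delta>}"
  have unb: "\<exists>\<delta>\<in>D. (\<gamma>0, \<delta>) \<in> K" if g0: "\<gamma>0 \<in> W" for \<gamma>0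
  proof -
    define g where "g n = (c ^^ n) \<gamma>0" for n
    have gW: "g n \<in> W" for n
      by (induction n) (simp_all add: g_def g0 c)
    have gS: "g (Suc n) = c (g n)" for n unfolding g_def by simp
    have 1: "|range g| \<le>o |UNIV :: nat set|" by (rule card_of_image)
    have 2: "|UNIV :: nat set| \<le>o |Field L|" using L(2) infinite_iff_card_of_nat by blast
    have "|range g| \<le>o L" using ordLeq_ordIso_trans[OF ordLeq_transitive[OF 1 2] FL] .
    moreover have "range g \<subseteq> W" using gW by blast
    ultimately obtain ub where ub: "ub \<in> W" "\<forall>s\<in>range g. (s,ub) \<in> K \<and> s \<noteq> ub" using small by blast
    define U where "U = {u\<in>W. \<forall>n. (g n, u) \<in> K}"
    have UW: "U \<subseteq> Field K" unfolding U_def W_def by blast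
    have ubU: "ub \<in> U" unfolding U_def using ub by blast
    define \<delta> where "\<delta> = wo_rel.minim K U"
    have \<delta>U: "\<delta> \<in> U" unfolding \<delta>_def using wo_rel.minim_in[OF Kw UW] ubU by blast
    have \<delta>least: "(\<delta>, u) \<in> K" if "u \<in> U" for u unfolding \<delta>_def using wo_rel.minim_least[OF Kw UW that] .
    have "\<delta> \<in> D" unfolding D_def
    proof (intro CollectI conjI ballI)
      show "\<delta> \<in> W" using \<delta>U unfolding U_def by blast
      fix \<eta> j assume \<eta>: "\<eta> \<in> underS K \<delta>" and j: "j \<in> Field L"
      have \<eta>W: "\<eta> \<in> W" using \<eta> usW by blast
      have \<eta>\<delta>: "(\<eta>, \<delta>) \<in> K" "\<eta> \<noteq> \<delta>" using \<eta> unfolding underS_def by blast+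
      have "\<exists>n. (g n, \<eta>) \<notin> K"
      proof (rule ccontr)
        assume "\<not> (\<exists>n. (g n, \<eta>) \<notin> K)"
        then have "\<eta> \<in> U" unfolding U_def using \<eta>W by blast
        then have "(\<delta>, \<eta>) \<in> K" by (rule \<delta>least)
        then show False using \<eta>\<delta> antisymD[OF wo_rel.ANTISYM[OF Kw]] by blast
      qed
      then obtain n where n: "(g n, \<eta>) \<notin> K" by blast
      have gnK: "g n \<in> Field K" and \<eta>K: "\<eta> \<in> Field K" using gW \<eta>W unfolding W_def by blast+
      have "(\<eta>, g n) \<in> K" using wo_not_lt[OF Kw gnK \<eta>K] n by blast
      moreover have "\<eta> \<noteq> g n" using n wo_refl[OF Kw \<eta>K] by blast
      ultimately have "\<eta> \<in> underS K (g n)" unfolding underS_def by blast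
      then have "\<pi> (\<eta>, j) \<in> \<pi> ` (underS K (g n) \<times> Field L)" using j by blast
      then have 1: "(\<pi> (\<eta>, j), g (Suc n)) \<in> K" "\<pi> (\<eta>, j) \<noteq> g (Suc n)"
        using c[OF gW[of n]] unfolding gS[of n] by blast+
      have 2: "(g (Suc n), \<delta>) \<in> K" using \<delta>U unfolding U_def by blast
      show "\<pi> (\<eta>, j) \<in> underS K \<delta>" using wo_lt_le_trans[OF Kw 1 2] unfolding underS_def by blast
    qed
    moreover have "(g 0, \<delta>) \<in> K" using \<delta>U unfolding U_def by blast
    moreover have "g 0 = \<gamma>0" unfolding g_def by simp
    ultimately show ?thesis by blast
  qed
  have "club K D" unfolding club_def
  proof (intro conjI ballI impI)
    show "D \<subseteq> Field K" unfolding D_def W_def by blast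
    show "\<exists>\<delta>\<in>D. (\<gamma>, \<delta>) \<in> K" if "\<gamma> \<in> Field K" for \<gamma> using unb that unfolding W_def by blast
    fix \<alpha> assume \<alpha>: "\<alpha> \<in> Field K" and h: "underS K \<alpha> \<noteq> {} \<and> sup_is K (D \<inter> underS K \<alpha>) \<alpha>"
    show "\<alpha> \<in> D" unfolding D_def
    proof (intro CollectI conjI ballI)
      show "\<alpha> \<in> W" using \<alpha> unfolding W_def .
      fix \<eta> j assume \<eta>: "\<eta> \<in> underS K \<alpha>" and j: "j \<in> Field L"
      obtain \<delta> where \<delta>: "\<delta> \<in> D" "\<delta> \<in> underS K \<alpha>" "(\<eta>, \<delta>) \<in> K" "\<eta> \<noteq> \<delta>"
        using h \<eta> unfolding sup_is_def by blast
      have "\<eta> \<in> underS K \<delta>" using \<delta>(3,4) unfolding underS_def by blast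
      then have "\<pi> (\<eta>, j) \<in> underS K \<delta>" using \<delta>(1) j unfolding D_def by blast
      then have 1: "(\<pi> (\<eta>, j), \<delta>) \<in> K" "\<pi> (\<eta>, j) \<noteq> \<delta>" unfolding underS_def by blast+
      have 2: "(\<delta>, \<alpha>) \<in> K" using \<delta>(2) unfolding underS_def by blast
      show "\<pi> (\<eta>, j) \<in> underS K \<alpha>" using wo_lt_le_trans[OF Kw 1 2] unfolding underS_def by blast
    qed
  qed
  moreover have "\<forall>\<delta>\<in>D. \<forall>\<eta>\<in>underS K \<delta>. \<forall>j\<in>Field L. \<pi> (\<eta>,j) \<in> underS K \<delta>" unfolding D_def by blast
  ultimately show ?thesis using \<pi> unfolding K_def W_def by blast
qed

theorem lemma3p5:
  fixes L :: "'a rel" and T :: "'t rel" and C :: "'c rel"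
    and d :: "'a set \<Rightarrow> 'a set \<Rightarrow> 'a"
  assumes "Card_order L" and "\<not> finite (Field L)"
    and "Card_order T" and "\<not> finite (Field T)" and "regularCard T"
    and "Card_order C" and "card (Field C) = 2 \<or> \<not> finite (Field C)"
    and "m_equals L T C"
    and "d \<in> Field (cardSuc L) \<rightarrow> Field (cardSuc L) \<rightarrow> Field L"
  shows "A_set (cardSuc L) d \<inter> E_cof (cardSuc L) T \<in> J_ideal (cardSuc L) C"
proof -
  note L = assms(1,2)
  note TC = assms(3)
  define K where "K = cardSuc L"
  define W where "W = Field K"
  have KC: "Card_order K" unfolding K_def using cardSuc_Card_order[OF L(1)] .
  have Kw: "wo_rel K" using Card_order_wo_rel[OF KC] .
  have dW: "d \<eta> \<beta> \<in> Field L" if "\<eta> \<in> W" "\<beta> \<in> W" for \<eta> \<beta>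
    using assms(9) that unfolding W_def K_def Pi_def by simp
  obtain \<pi> D where cp: "club K D \<and> inj_on \<pi> (W \<times> Field L)
    \<and> \<pi> ` (W \<times> Field L) \<subseteq> W
    \<and> (\<forall>\<delta>\<in>D. \<forall>\<eta>\<in>underS K \<delta>. \<forall>j\<in>Field L. \<pi> (\<eta>,j) \<in> underS K \<delta>)"
    using club_pairing[OF L] unfolding K_def W_def by (elim exE)
  have club: "club K D" and \<pi>inj: "inj_on \<pi> (W \<times> Field L)"
    and \<pi>W: "\<pi> ` (W \<times> Field L) \<subseteq> W"
    and \<pi>D: "\<forall>\<delta>\<in>D. \<forall>\<eta>\<in>underS K \<delta>. \<forall>j\<in>Field L. \<pi> (\<eta>,j) \<in> underS K \<delta>"
    using cp by simp_all
  obtain H where Hc: "m_covers L T C H" and Hcard: "|H| =o L"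
    using assms(8) unfolding m_equals_def by blast
  have FL: "|Field L| =o L" using card_of_Field_ordIso[OF L(1)] .
  have "|Field L| =o |H|" using ordIso_transitive[OF FL ordIso_symmetric[OF Hcard]] .
  then obtain hj where hj: "bij_betw hj (Field L) H" using card_of_ordIso by blast
  have Hsub: "H \<subseteq> Field L \<rightarrow>\<^sub>E small_subsets (Field L) C" using Hc unfolding m_covers_def by blast
  have hjsmall: "|hj j \<xi>| <o C" if "j \<in> Field L" "\<xi> \<in> Field L" for j \<xi>
  proof -
    have "hj j \<in> H" using hj that(1) bij_betwE by blast
    then have "hj j \<xi> \<in> small_subsets (Field L) C" using Hsub that(2) by blast
    then show ?thesis unfolding small_subsets_def by blast
  qed
  have usL: "|underS K \<beta>| \<le>o |Field L|" if "\<beta> \<in> W" for \<beta>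
  proof -
    have "\<beta> \<in> Field K" using that unfolding W_def .
    then have "|underS K \<beta>| <o K" using card_of_underS[OF KC] by blast
    then have "|underS K \<beta>| \<le>o L" unfolding K_def using cardSuc_ordLeq_ordLess[OF L(1) card_of_Card_order] by blast
    then show ?thesis using ordLeq_ordIso_trans[OF _ ordIso_symmetric[OF FL]] by blast
  qed
  define e where "e \<beta> = (SOME f. inj_on f (underS K \<beta>) \<and> f ` underS K \<beta> \<subseteq> Field L)" for \<beta>
  have e: "inj_on (e \<beta>) (underS K \<beta>) \<and> e \<beta> ` underS K \<beta> \<subseteq> Field L" if "\<beta> \<in> W" for \<beta>
  proof -
    have "\<exists>f. inj_on f (underS K \<beta>) \<and> f ` underS K \<beta> \<subseteq> Field L"
      using usL[OF that] card_of_ordLeq by blast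
    then show ?thesis unfolding e_def by (rule someI_ex)
  qed
  define P where "P i = inv_into (W \<times> Field L) \<pi> i" for i
  define F where "F i \<beta> = {\<gamma> \<in> underS K \<beta>. i \<in> \<pi> ` (W \<times> Field L) \<and>
      e \<beta> \<gamma> \<in> hj (snd (P i)) (d (fst (P i)) \<beta>)}" for i \<beta>
  have usW: "underS K \<gamma> \<subseteq> W" for \<gamma> unfolding W_def using underS_Field[of _ K \<gamma>] by blast
  obtain x0 where x0: "x0 \<in> Field L" using L(2) by (metis finite.emptyI ex_in_conv)
  have Fsmall: "F i \<beta> \<in> small_subsets W C" if \<beta>: "\<beta> \<in> W" for i \<beta>
  proof (cases "i \<in> \<pi> ` (W \<times> Field L)")
    case True
    have Pi: "P i \<in> W \<times> Field L" unfolding P_def using True by (rule inv_into_into)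
    define \<eta> where "\<eta> = fst (P i)"
    define j where "j = snd (P i)"
    have \<eta>W: "\<eta> \<in> W" and jL: "j \<in> Field L" using Pi unfolding \<eta>_def j_def by auto
    have Fe: "F i \<beta> = {\<gamma> \<in> underS K \<beta>. e \<beta> \<gamma> \<in> hj j (d \<eta> \<beta>)}"
      unfolding F_def \<eta>_def j_def using True by blast
    have "inj_on (e \<beta>) (F i \<beta>) \<and> e \<beta> ` F i \<beta> \<subseteq> hj j (d \<eta> \<beta>)"
      using e[OF \<beta>] unfolding Fe by (auto intro: inj_on_subset)
    then have "|F i \<beta>| \<le>o |hj j (d \<eta> \<beta>)|" using card_of_ordLeq by blast
    then have "|F i \<beta>| <o C" using ordLeq_ordLess_trans hjsmall[OF jL dW[OF \<eta>W \<beta>]] by blast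
    moreover have "F i \<beta> \<subseteq> W" unfolding F_def using usW by blast
    ultimately show ?thesis unfolding small_subsets_def by blast
  next
    case False
    then have "F i \<beta> = {}" unfolding F_def by blast
    moreover have "|{}| <o C" using ordLeq_ordLess_trans[OF card_of_empty hjsmall[OF x0 x0]] .
    ultimately show ?thesis unfolding small_subsets_def by simp
  qed
  have main: "\<exists>i\<in>underS K \<alpha>. sup_is K {\<beta>\<in>B. f \<beta> \<in> F i \<beta>} \<alpha>"
    if \<alpha>S: "\<alpha> \<in> A_set K d \<inter> E_cof K T" and \<alpha>D: "\<alpha> \<in> D"
      and freg: "\<forall>\<beta>\<in>underS K \<alpha>. f \<beta> \<in> underS K \<alpha> \<and> (underS K \<beta> \<noteq> {} \<longrightarrow> f \<beta> \<in> underS K \<beta>)"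
      and Bc: "cofinal_sub K B \<alpha>" for \<alpha> f B
  proof -
    have \<alpha>K: "\<alpha> \<in> Field K" and Aprop: "\<forall>B. cofinal_sub K B \<alpha> \<longrightarrow>
      (\<exists>\<eta>\<in>underS K \<alpha>. \<exists>B'. B' \<subseteq> B \<and> cofinal_sub K B' \<alpha> \<and> inj_on (\<lambda>\<beta>. d \<eta> \<beta>) B')"
      using \<alpha>S unfolding A_set_def by blast+
    have cf: "cf_is K \<alpha> T" using \<alpha>S unfolding E_cof_def by blast
    obtain C0 where C0: "cofinal_sub K C0 \<alpha>" "|C0| =o T" using cf unfolding cf_is_def by blast
    have cfmin: "T \<le>o |B1|" if "cofinal_sub K B1 \<alpha>" for B1 using cf that unfolding cf_is_def by blast
    obtain B0 where B0: "B0 \<subseteq> B" "cofinal_sub K B0 \<alpha>" "|B0| \<le>o T" "\<forall>\<beta>\<in>B0. underS K \<beta> \<noteq> {}"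
      "\<forall>\<gamma>\<in>underS K \<alpha>. |{b\<in>B0. (b,\<gamma>) \<in> K}| <o T"
      using records[OF Kw TC \<alpha>K C0 Bc] by blast
    obtain \<eta> B' where \<eta>: "\<eta> \<in> underS K \<alpha>" and B': "B' \<subseteq> B0" "cofinal_sub K B' \<alpha>" "inj_on (d \<eta>) B'"
      using Aprop B0(2) by blast
    have B'T: "|B'| =o T"
      using ordLeq_transitive[OF card_of_mono1[OF B'(1)] B0(3)] cfmin[OF B'(2)] ordIso_iff_ordLeq by blast
    have B'W: "B' \<subseteq> W" using B'(2) usW unfolding cofinal_sub_def by blast
    have \<eta>W: "\<eta> \<in> W" using \<eta> usW by blast
    define X where "X = d \<eta> ` B'"
    have XL: "X \<subseteq> Field L" unfolding X_def using dW \<eta>W B'W by blast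
    have bijX: "bij_betw (d \<eta>) B' X" unfolding X_def using B'(3) by (rule inj_on_imp_bij_betw)
    have "|B'| =o |X|" using bijX card_of_ordIso by blast
    then have XT: "|X| =o T" using ordIso_transitive[OF ordIso_symmetric B'T] by blast
    define bi where "bi = the_inv_into B' (d \<eta>)"
    have bi1: "bi \<xi> \<in> B'" "d \<eta> (bi \<xi>) = \<xi>" if "\<xi> \<in> X" for \<xi>
      using that B'(3) unfolding bi_def X_def by (auto intro: the_inv_into_into f_the_inv_into_f)
    have bi2: "bi (d \<eta> \<beta>) = \<beta>" if "\<beta> \<in> B'" for \<beta>
      unfolding bi_def using the_inv_into_f_f[OF B'(3) that] .
    have B'us: "B' \<subseteq> underS K \<alpha>" using B'(2) unfolding cofinal_sub_def by blast
    have fB': "f \<beta> \<in> underS K \<beta>" if "\<beta> \<in> B'" for \<beta>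
      using freg B'us B0(4) B'(1) that by blast
    define g where "g \<xi> = e (bi \<xi>) (f (bi \<xi>))" for \<xi>
    have gL: "g \<in> X \<rightarrow> Field L"
    proof
      fix \<xi> assume "\<xi> \<in> X"
      then have "bi \<xi> \<in> B'" by (rule bi1)
      then show "g \<xi> \<in> Field L" unfolding g_def using e B'W fB' by blast
    qed
    obtain h where h: "h \<in> H" "|{\<xi>\<in>X. g \<xi> \<in> h \<xi>}| =o T"
      using Hc XL XT gL unfolding m_covers_def by blast
    obtain j where j: "j \<in> Field L" "h = hj j" using h(1) hj by (metis bij_betw_imp_surj_on imageE)
    define i where "i = \<pi> (\<eta>, j)"
    have ij: "(\<eta>, j) \<in> W \<times> Field L" using \<eta>W j(1) by blast
    have iU: "i \<in> underS K \<alpha>" unfolding i_def using \<pi>D \<alpha>D \<eta> j(1) by blast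
    have Pi: "P i = (\<eta>, j)" unfolding P_def i_def using inv_into_f_f[OF \<pi>inj ij] .
    have iim: "i \<in> \<pi> ` (W \<times> Field L)" unfolding i_def using ij by blast
    define Z where "Z = {\<beta>\<in>B'. f \<beta> \<in> F i \<beta>}"
    have Zchar: "\<beta> \<in> Z \<longleftrightarrow> \<beta> \<in> B' \<and> g (d \<eta> \<beta>) \<in> h (d \<eta> \<beta>)" for \<beta>
    proof
      assume "\<beta> \<in> Z"
      then have "\<beta> \<in> B'" "e \<beta> (f \<beta>) \<in> hj j (d \<eta> \<beta>)" unfolding Z_def F_def Pi by auto
      then show "\<beta> \<in> B' \<and> g (d \<eta> \<beta>) \<in> h (d \<eta> \<beta>)" unfolding g_def j(2) using bi2[of \<beta>] by simp
    next
      assume a: "\<beta> \<in> B' \<and> g (d \<eta> \<beta>) \<in> h (d \<eta> \<beta>)"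
      then have "e \<beta> (f \<beta>) \<in> hj j (d \<eta> \<beta>)" unfolding g_def j(2) using bi2[of \<beta>] by simp
      then show "\<beta> \<in> Z" unfolding Z_def F_def Pi using a fB' iim by auto
    qed
    have "d \<eta> ` Z = {\<xi>\<in>X. g \<xi> \<in> h \<xi>}"
    proof
      show "d \<eta> ` Z \<subseteq> {\<xi>\<in>X. g \<xi> \<in> h \<xi>}" using Zchar unfolding X_def by blast
      show "{\<xi>\<in>X. g \<xi> \<in> h \<xi>} \<subseteq> d \<eta> ` Z"
      proof
        fix \<xi> assume "\<xi> \<in> {\<xi>\<in>X. g \<xi> \<in> h \<xi>}"
        then have "\<xi> \<in> X" "g \<xi> \<in> h \<xi>" by blast+
        then have "bi \<xi> \<in> Z" "d \<eta> (bi \<xi>) = \<xi>" using Zchar bi1 by auto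
        then show "\<xi> \<in> d \<eta> ` Z" by (metis imageI)
      qed
    qed
    moreover have "Z \<subseteq> B'" unfolding Z_def by blast
    then have "bij_betw (d \<eta>) Z (d \<eta> ` Z)" using inj_on_subset[OF B'(3)] inj_on_imp_bij_betw by blast
    ultimately have "|Z| =o |{\<xi>\<in>X. g \<xi> \<in> h \<xi>}|" using card_of_ordIso by metis
    then have ZT: "|Z| =o T" using ordIso_transitive h(2) by blast
    have supZ: "sup_is K Z \<alpha>"
    proof (rule ccontr)
      assume "\<not> sup_is K Z \<alpha>"
      then obtain \<gamma> where \<gamma>: "\<gamma> \<in> underS K \<alpha>" "\<forall>\<beta>\<in>Z. \<not> ((\<gamma>, \<beta>) \<in> K \<and> \<gamma> \<noteq> \<beta>)"
        unfolding sup_is_def by blast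
      have \<gamma>K: "\<gamma> \<in> Field K" using \<gamma>(1) usW unfolding W_def by blast
      have "Z \<subseteq> {b\<in>B0. (b,\<gamma>) \<in> K}"
      proof
        fix \<beta> assume \<beta>: "\<beta> \<in> Z"
        then have "\<beta> \<in> B'" unfolding Z_def by blast
        then have "\<beta> \<in> B0" "\<beta> \<in> Field K" using B'(1) B'W unfolding W_def by blast+
        then show "\<beta> \<in> {b\<in>B0. (b,\<gamma>) \<in> K}" using wo_not_lt[OF Kw \<gamma>K _ ] \<gamma>(2) \<beta> by blast
      qed
      then have "|Z| <o T" using ordLeq_ordLess_trans[OF card_of_mono1] B0(5) \<gamma>(1) by blast
      then show False using ZT not_ordLess_ordIso by blast
    qed
    have "Z \<subseteq> {\<beta>\<in>B. f \<beta> \<in> F i \<beta>}" unfolding Z_def using B'(1) B0(1) by blast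
    then have "sup_is K {\<beta>\<in>B. f \<beta> \<in> F i \<beta>} \<alpha>" using supZ unfolding sup_is_def by blast
    then show ?thesis using iU by blast
  qed
  have "A_set K d \<inter> E_cof K T \<in> J_ideal K C"
    unfolding J_ideal_def
  proof (intro CollectI conjI exI[of _ D] exI[of _ F])
    show "A_set K d \<inter> E_cof K T \<subseteq> Field K" unfolding A_set_def by blast
    show "club K D" by (rule club)
    show "\<forall>i\<in>Field K. F i \<in> Field K \<rightarrow> small_subsets (Field K) C"
      using Fsmall unfolding W_def by blast
    show "\<forall>\<alpha>\<in>A_set K d \<inter> E_cof K T \<inter> D. \<forall>f B.
            (\<forall>\<beta>\<in>underS K \<alpha>. f \<beta> \<in> underS K \<alpha> \<and> (underS K \<beta> \<noteq> {} \<longrightarrow> f \<beta> \<in> underS K \<beta>)) \<and>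
            cofinal_sub K B \<alpha> \<longrightarrow>
            (\<exists>i\<in>underS K \<alpha>. sup_is K {\<beta>\<in>B. f \<beta> \<in> F i \<beta>} \<alpha>)"
      using main by blast
  qed
  then show ?thesis unfolding K_def .
qed

end
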